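(* Consider Configuration III (two agents in mutual beacon-referenced pursuit, each referencing its own beacon, with $b>0$) with parameters $\mu>0$, $\lambda\in(0,1)$, $a\in[-1,1]$ and $a_0=0$. A circling equilibrium exists if and only if $a<0$, and at a circling equilibrium the shape variables satisfy $$\bar x_1=\bar x_2=0,\ \bar x_{1b1}=\bar x_{2b2}=0,\ \hat x_1=\hat x_2=0,\ \tilde x=-1,\ \rho=\frac{2}{(1-\lambda)\mu(-a)},\ \hat r_1=\hat r_2,\ \rho_{1b1}^2-\rho_{2b2}^2-2\hat r_1=0.$$
   Context: Two-agent setup: beacons $\mathbf r_{b1}=(0,0,-b)$, $\mathbf r_{b2}=(0,0,b)$ with $b\ge0$, $\hat{\mathbf b}=\mathbf r_{b2}-\mathbf r_{b1}=(0,0,2b)$. Agents $i=1,2$ have positions $\mathbf r_i\in\mathbb R^3$ and unit velocities $\mathbf x_i$. Let $\mathbf r=\mathbf r_1-\mathbf r_2$, $\mathbf r_{1b1}=\mathbf r_1-\mathbf r_{b1}$, $\mathbf r_{2b2}=\mathbf r_2-\mathbf r_{b2}$, $\rho=|\mathbf r|$, $\rho_{1b1}=|\mathbf r_{1b1}|$, $\rho_{2b2}=|\mathbf r_{2b2}|$, $\bar x_1=\mathbf x_1\cdot\mathbf r/\rho$, $\bar x_2=-\mathbf x_2\cdot\mathbf r/\rho$, $\bar x_{1b1}=\mathbf x_1\cdot\mathbf r_{1b1}/\rho_{1b1}$, $\bar x_{2b2}=\mathbf x_2\cdot\mathbf r_{2b2}/\rho_{2b2}$, $\tilde x=\mathbf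 x_1\cdot\mathbf x_2$, $\hat r_i=\mathbf r_i\cdot\hat{\mathbf b}$, $\hat x_i=\mathbf x_i\cdot\hat{\mathbf b}$. With gain $\mu>0$, weight $\lambda\in(0,1)$, common agent-bearing parameter $a\in[-1,1]$ and common beacon-bearing parameter $a_0\in[-1,1]$, the closed-loop dynamics are $\dot{\mathbf r}_i=\mathbf x_i$ and $$\dot{\mathbf x}_1=-(1-\lambda)\mu(\bar x_1-a)\Bigl(\tfrac{\mathbf r}{\rho}-\bar x_1\mathbf x_1\Bigr)-\lambda\mu(\bar x_{1b1}-a_0)\Bigl(\tfrac{\mathbf r_{1b1}}{\rho_{1b1}}-\bar x_{1b1}\mathbf x_1\Bigr),$$ $$\dot{\mathbf x}_2=-(1-\lambda)\mu(\bar x_2-a)\Bigl(-\tfrac{\mathbf r}{\rho}-\bar x_2\mathbf x_2\Bigr)-\lambda\mu(\bar x_{2b2}-a_0)\Bigl(\tfrac{\mathbf r_{2b2}}{\rho_{2b2}}-\bar x_{2b2}\mathbf x_2\Bigr).$$ The shape variables $(\bar x_1,\bar x_2,\bar x_{1b1},\bar x_{2b2},\tilde x,\rho,\rho_{1b1},\rho_{2b2},\hat r_1,\hat r_2,\hat x_1,\hat x_2)$ have time derivatives along this flow that depend only on the shape variables. A circling equilibrium is a state with $\rho,\rho_{1b1},\rho_{2b2}>0$ at which the time derivatives of all shape variables vanish. Configuration III is the case $b>0$ (two distinct beacons). *)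

theory Defs
  imports "HOL-Analysis.Analysis"
begin

text \<open>State of the two-agent system: (r1, r2, x1, x2), positions and (unit) velocities in R^3.\<close>
type_synonym state = "(real^3) \<times> (real^3) \<times> (real^3) \<times> (real^3)"

definition beacon1 :: "real \<Rightarrow> real^3" where
  "beacon1 b = vector [0, 0, - b]"

definition beacon2 :: "real \<Rightarrow> real^3" where
  "beacon2 b = vector [0, 0, b]"

definition bhat :: "real \<Rightarrow> real^3" where
  "bhat b = beacon2 b - beacon1 b"

definition field :: "real \<Rightarrow> real \<Rightarrow> real \<Rightarrow> real \<Rightarrow> real \<Rightarrow> state \<Rightarrow> state" where
  "field mu lam a a0 b s = (case s of (r1, r2, x1, x2) \<Rightarrow>
     (let r = r1 - r2; rho = norm r;
          r1b1 = r1 - beacon1 b; rho1b1 = norm r1b1;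
          r2b2 = r2 - beacon2 b; rho2b2 = norm r2b2;
          xb1 = (x1 \<bullet> r) / rho; xb2 = - (x2 \<bullet> r) / rho;
          xb1b1 = (x1 \<bullet> r1b1) / rho1b1; xb2b2 = (x2 \<bullet> r2b2) / rho2b2;
          dx1 = - ((1 - lam) * mu * (xb1 - a)) *\<^sub>R ((1 / rho) *\<^sub>R r - xb1 *\<^sub>R x1)
                - (lam * mu * (xb1b1 - a0)) *\<^sub>R ((1 / rho1b1) *\<^sub>R r1b1 - xb1b1 *\<^sub>R x1);
          dx2 = - ((1 - lam) * mu * (xb2 - a)) *\<^sub>R (- (1 / rho) *\<^sub>R r - xb2 *\<^sub>R x2)
                - (lam * mu * (xb2b2 - a0)) *\<^sub>R ((1 / rho2b2) *\<^sub>R r2b2 - xb2b2 *\<^sub>R x2)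
      in (x1, x2, dx1, dx2)))"

text \<open>Shape variables
  (xbar1, xbar2, xbar1b1, xbar2b2, xtilde, rho, rho1b1, rho2b2, rhat1, rhat2, xhat1, xhat2).\<close>
type_synonym shape_vars =
  "real \<times> real \<times> real \<times> real \<times> real \<times> real \<times> real \<times> real \<times> real \<times> real \<times> real \<times> real"

definition shape :: "real \<Rightarrow> state \<Rightarrow> shape_vars" where
  "shape b s = (case s of (r1, r2, x1, x2) \<Rightarrow>
     (let r = r1 - r2; rho = norm r;
          r1b1 = r1 - beacon1 b; rho1b1 = norm r1b1;
          r2b2 = r2 - beacon2 b; rho2b2 = norm r2b2
      in ((x1 \<bullet> r) / rho, - (x2 \<bullet> r) / rho,
          (x1 \<bullet> r1b1) / rho1b1, (x2 \<bullet> r2b2) / rho2b2,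
          x1 \<bullet> x2, rho, rho1b1, rho2b2,
          r1 \<bullet> bhat b, r2 \<bullet> bhat b, x1 \<bullet> bhat b, x2 \<bullet> bhat b)))"

definition circling_equilibrium ::
  "real \<Rightarrow> real \<Rightarrow> real \<Rightarrow> real \<Rightarrow> real \<Rightarrow> state \<Rightarrow> bool" where
  "circling_equilibrium mu lam a a0 b s \<longleftrightarrow>
     (case s of (r1, r2, x1, x2) \<Rightarrow>
        norm x1 = 1 \<and> norm x2 = 1 \<and>
        norm (r1 - r2) > 0 \<and> norm (r1 - beacon1 b) > 0 \<and> norm (r2 - beacon2 b) > 0) \<and>
     ((\<lambda>t. shape b (s + t *\<^sub>R field mu lam a a0 b s)) has_vector_derivative 0) (at 0)"

end

theory Submission
  imports Defs
begin


lemma d_inner_lin: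
  fixes a a' c c' :: "'a::real_inner"
  shows "((\<lambda>t. inner (a + t *\<^sub>R a') (c + t *\<^sub>R c')) has_real_derivative (inner a' c + inner a c')) (at 0)"
proof -
  have e: "(\<lambda>t. inner (a + t *\<^sub>R a') (c + t *\<^sub>R c')) = (\<lambda>t. inner a c + t * (inner a' c + inner a c') + t^2 * inner a' c')"
    by (rule ext) (simp add: inner_add_left inner_add_right algebra_simps power2_eq_square)
  show ?thesis unfolding e
    by (auto intro!: derivative_eq_intros)
qed

lemma d_inner_const:
  fixes a a' c :: "'a::real_inner"
  shows "((\<lambda>t. inner (a + t *\<^sub>R a') c) has_real_derivative (inner a' c)) (at 0)"
  using d_inner_lin[of a a' c 0] by simp

lemma d_norm_lin:
  fixes c c' :: "'a::real_inner"
  assumes "c \<noteq> 0"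
  shows "((\<lambda>t. norm (c + t *\<^sub>R c')) has_real_derivative (inner c c' / norm c)) (at 0)"
proof -
  have e: "(\<lambda>t. norm (c + t *\<^sub>R c')) = (\<lambda>t. sqrt (inner (c + t *\<^sub>R c') (c + t *\<^sub>R c')))"
    by (rule ext) (simp add: norm_eq_sqrt_inner)
  have p: "0 < inner c c" using assms by simp
  have "((\<lambda>t. sqrt (inner (c + t *\<^sub>R c') (c + t *\<^sub>R c'))) has_real_derivative
     (inverse (sqrt (inner c c)) / 2) * (inner c' c + inner c c')) (at 0)"
    apply (rule DERIV_chain2[OF _ d_inner_lin[of c c' c c']])
    using DERIV_real_sqrt[OF p] by simp
  moreover have "(inverse (sqrt (inner c c)) / 2) * (inner c' c + inner c c') = inner c c' / norm c"
    by (simp add: norm_eq_sqrt_inner inner_commute field_simps)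
  ultimately show ?thesis unfolding e by simp
qed

lemma d_quot:
  fixes a a' c c' :: "'a::real_inner"
  assumes "c \<noteq> 0"
  shows "((\<lambda>t. inner (a + t *\<^sub>R a') (c + t *\<^sub>R c') / norm (c + t *\<^sub>R c')) has_real_derivative
     (((inner a' c + inner a c') * norm c - inner a c * (inner c c' / norm c)) / (norm c)^2)) (at 0)"
  using DERIV_divide[OF d_inner_lin[of a a' c c'] d_norm_lin[OF assms, of c']] assms
  by (simp add: power2_eq_square)

definition Qd :: "real^3 \<Rightarrow> real^3 \<Rightarrow> real^3 \<Rightarrow> real^3 \<Rightarrow> real" where
  "Qd a a' c c' = ((inner a' c + inner a c') * norm c - inner a c * (inner c c' / norm c)) / (norm c)^2"

lemma rv: "((f::real\<Rightarrow>real) has_real_derivative d) (at 0) \<Longrightarrow> (f has_vector_derivative d) (at 0)"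
  using has_real_derivative_iff_has_vector_derivative by blast

lemma shape_deriv:
  fixes r1 r2 x1 x2 v1 v2 w1 w2 :: "real^3"
  assumes "r1 - r2 \<noteq> 0" "r1 - beacon1 b \<noteq> 0" "r2 - beacon2 b \<noteq> 0"
  shows "((\<lambda>t. shape b ((r1,r2,x1,x2) + t *\<^sub>R (v1,v2,w1,w2))) has_vector_derivative
   (Qd x1 w1 (r1-r2) (v1-v2), - Qd x2 w2 (r1-r2) (v1-v2), Qd x1 w1 (r1 - beacon1 b) v1,
    Qd x2 w2 (r2 - beacon2 b) v2, inner w1 x2 + inner x1 w2,
    inner (r1-r2) (v1-v2) / norm (r1-r2), inner (r1 - beacon1 b) v1 / norm (r1 - beacon1 b),
    inner (r2 - beacon2 b) v2 / norm (r2 - beacon2 b),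
    inner v1 (bhat b), inner v2 (bhat b), inner w1 (bhat b), inner w2 (bhat b))) (at 0)"
proof -
  have e1: "\<And>t. r1 + t *\<^sub>R v1 - (r2 + t *\<^sub>R v2) = (r1 - r2) + t *\<^sub>R (v1 - v2)"
    by (simp add: algebra_simps)
  have e2: "\<And>t c. r1 + t *\<^sub>R v1 - c = (r1 - c) + t *\<^sub>R v1"
    "\<And>t c. r2 + t *\<^sub>R v2 - c = (r2 - c) + t *\<^sub>R v2"
    by (simp_all add: algebra_simps)
  have m: "\<And>t. - ((x2 + t *\<^sub>R w2) \<bullet> ((r1 - r2) + t *\<^sub>R (v1 - v2))) / norm ((r1 - r2) + t *\<^sub>R (v1 - v2))
      = - ((x2 + t *\<^sub>R w2) \<bullet> ((r1 - r2) + t *\<^sub>R (v1 - v2)) / norm ((r1 - r2) + t *\<^sub>R (v1 - v2)))"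
    by simp
  have F: "(\<lambda>t. shape b ((r1,r2,x1,x2) + t *\<^sub>R (v1,v2,w1,w2))) = (\<lambda>t.
     (inner (x1 + t *\<^sub>R w1) ((r1 - r2) + t *\<^sub>R (v1 - v2)) / norm ((r1 - r2) + t *\<^sub>R (v1 - v2)),
      - (inner (x2 + t *\<^sub>R w2) ((r1 - r2) + t *\<^sub>R (v1 - v2)) / norm ((r1 - r2) + t *\<^sub>R (v1 - v2))),
      inner (x1 + t *\<^sub>R w1) ((r1 - beacon1 b) + t *\<^sub>R v1) / norm ((r1 - beacon1 b) + t *\<^sub>R v1),
      inner (x2 + t *\<^sub>R w2) ((r2 - beacon2 b) + t *\<^sub>R v2) / norm ((r2 - beacon2 b) + t *\<^sub>R v2),
      inner (x1 + t *\<^sub>R w1) (x2 + t *\<^sub>R w2),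
      norm ((r1 - r2) + t *\<^sub>R (v1 - v2)),
      norm ((r1 - beacon1 b) + t *\<^sub>R v1),
      norm ((r2 - beacon2 b) + t *\<^sub>R v2),
      inner (r1 + t *\<^sub>R v1) (bhat b), inner (r2 + t *\<^sub>R v2) (bhat b),
      inner (x1 + t *\<^sub>R w1) (bhat b), inner (x2 + t *\<^sub>R w2) (bhat b)))"
    by (rule ext) (simp only: shape_def Let_def plus_prod_def scaleR_prod_def fst_conv snd_conv prod.case, simp only: e1, simp only: e2 m)
  have xt: "((\<lambda>t. inner (x1 + t *\<^sub>R w1) (x2 + t *\<^sub>R w2)) has_real_derivative (inner w1 x2 + inner x1 w2)) (at 0)"
    by (rule d_inner_lin)
  show ?thesis unfolding F
    apply (intro has_vector_derivative_Pair rv)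
    apply (unfold Qd_def)
    apply (rule d_quot, rule assms)
    apply (rule DERIV_minus, rule d_quot, rule assms)
    apply (rule d_quot, rule assms)
    apply (rule d_quot, rule assms)
    apply (rule xt)
    apply (rule d_norm_lin, rule assms)+
    apply (rule d_inner_const)+
    done
qed

lemma field_eq: "field mu lam a a0 b (r1, r2, x1, x2) = (x1, x2,
   - (((1 - lam) * mu * ((x1 \<bullet> (r1 - r2)) / norm (r1 - r2) - a)) *\<^sub>R ((1 / norm (r1 - r2)) *\<^sub>R (r1 - r2) - ((x1 \<bullet> (r1 - r2)) / norm (r1 - r2)) *\<^sub>R x1))
   - (lam * mu * ((x1 \<bullet> (r1 - beacon1 b)) / norm (r1 - beacon1 b) - a0)) *\<^sub>R ((1 / norm (r1 - beacon1 b)) *\<^sub>R (r1 - beacon1 b) - ((x1 \<bullet> (r1 - beacon1 b)) / norm (r1 - beacon1 b)) *\<^sub>R x1),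
   - (((1 - lam) * mu * (- (x2 \<bullet> (r1 - r2)) / norm (r1 - r2) - a)) *\<^sub>R (- (1 / norm (r1 - r2)) *\<^sub>R (r1 - r2) - (- (x2 \<bullet> (r1 - r2)) / norm (r1 - r2)) *\<^sub>R x2))
   - (lam * mu * ((x2 \<bullet> (r2 - beacon2 b)) / norm (r2 - beacon2 b) - a0)) *\<^sub>R ((1 / norm (r2 - beacon2 b)) *\<^sub>R (r2 - beacon2 b) - ((x2 \<bullet> (r2 - beacon2 b)) / norm (r2 - beacon2 b)) *\<^sub>R x2))"
  unfolding field_def Let_def by simp

lemma equil_iff:
  fixes r1 r2 x1 x2 :: "real^3"
  shows "circling_equilibrium mu lam a a0 b (r1, r2, x1, x2) \<longleftrightarrow>
    norm x1 = 1 \<and> norm x2 = 1 \<and> r1 - r2 \<noteq> 0 \<and> r1 - beacon1 b \<noteq> 0 \<and> r2 - beacon2 b \<noteq> 0 \<and>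
    (\<exists>w1 w2. field mu lam a a0 b (r1, r2, x1, x2) = (x1, x2, w1, w2) \<and>
      Qd x1 w1 (r1-r2) (x1-x2) = 0 \<and> Qd x2 w2 (r1-r2) (x1-x2) = 0 \<and> Qd x1 w1 (r1 - beacon1 b) x1 = 0 \<and>
      Qd x2 w2 (r2 - beacon2 b) x2 = 0 \<and> inner w1 x2 + inner x1 w2 = 0 \<and>
      inner (r1-r2) (x1-x2) = 0 \<and> inner (r1 - beacon1 b) x1 = 0 \<and>
      inner (r2 - beacon2 b) x2 = 0 \<and>
      inner x1 (bhat b) = 0 \<and> inner x2 (bhat b) = 0 \<and> inner w1 (bhat b) = 0 \<and> inner w2 (bhat b) = 0)"
proof -
  obtain w1 w2 where fe: "field mu lam a a0 b (r1, r2, x1, x2) = (x1, x2, w1, w2)"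
    using field_eq by blast
  show ?thesis
  proof (cases "norm x1 = 1 \<and> norm x2 = 1 \<and> r1 - r2 \<noteq> 0 \<and> r1 - beacon1 b \<noteq> 0 \<and> r2 - beacon2 b \<noteq> 0")
    case False then show ?thesis unfolding circling_equilibrium_def by auto
  next
    case True
    then have n: "norm (r1 - r2) > 0" "norm (r1 - beacon1 b) > 0" "norm (r2 - beacon2 b) > 0" by auto
    note D = shape_deriv[of r1 r2 b x1 x2 x1 x2 w1 w2]
    have "circling_equilibrium mu lam a a0 b (r1, r2, x1, x2) \<longleftrightarrow>
      ((\<lambda>t. shape b ((r1,r2,x1,x2) + t *\<^sub>R (x1,x2,w1,w2))) has_vector_derivative 0) (at 0)"
      unfolding circling_equilibrium_def fe using True by auto
    also have "\<dots> \<longleftrightarrow> (Qd x1 w1 (r1-r2) (x1-x2), - Qd x2 w2 (r1-r2) (x1-x2), Qd x1 w1 (r1 - beacon1 b) x1,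
    Qd x2 w2 (r2 - beacon2 b) x2, inner w1 x2 + inner x1 w2,
    inner (r1-r2) (x1-x2) / norm (r1-r2), inner (r1 - beacon1 b) x1 / norm (r1 - beacon1 b),
    inner (r2 - beacon2 b) x2 / norm (r2 - beacon2 b),
    inner x1 (bhat b), inner x2 (bhat b), inner w1 (bhat b), inner w2 (bhat b)) = 0"
      using D True vector_derivative_unique_at by metis
    also have "\<dots> \<longleftrightarrow> (Qd x1 w1 (r1-r2) (x1-x2) = 0 \<and> Qd x2 w2 (r1-r2) (x1-x2) = 0 \<and> Qd x1 w1 (r1 - beacon1 b) x1 = 0 \<and>
      Qd x2 w2 (r2 - beacon2 b) x2 = 0 \<and> inner w1 x2 + inner x1 w2 = 0 \<and>
      inner (r1-r2) (x1-x2) = 0 \<and> inner (r1 - beacon1 b) x1 = 0 \<and>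
      inner (r2 - beacon2 b) x2 = 0 \<and>
      inner x1 (bhat b) = 0 \<and> inner x2 (bhat b) = 0 \<and> inner w1 (bhat b) = 0 \<and> inner w2 (bhat b) = 0)"
      using n by (simp add: zero_prod_def)
    finally show ?thesis using True fe by auto
  qed
qed

lemma inner_3: "inner (x::real^3) y = x$1*y$1 + x$2*y$2 + x$3*y$3"
  by (simp add: inner_vec_def sum_3)

lemma bhat_c: "(bhat b)$1 = 0" "(bhat b)$2 = 0" "(bhat b)$3 = 2*b"
  by (simp_all add: bhat_def beacon1_def beacon2_def)

lemma beacon_c: "(beacon1 b)$1 = 0" "(beacon1 b)$2 = 0" "(beacon1 b)$3 = -b"
  "(beacon2 b)$1 = 0" "(beacon2 b)$2 = 0" "(beacon2 b)$3 = b"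
  by (simp_all add: beacon1_def beacon2_def)

lemma forward:
  fixes r1 r2 x1 x2 :: "real^3"
  assumes mu: "mu > 0" and l0: "0 < lam" and l1: "lam < 1" and bp: "b > 0"
    and eq: "circling_equilibrium mu lam a 0 b (r1,r2,x1,x2)"
  shows "a < 0 \<and> inner x1 (r1-r2) = 0 \<and> inner x2 (r1-r2) = 0 \<and> inner x1 (r1 - beacon1 b) = 0
    \<and> inner x2 (r2 - beacon2 b) = 0 \<and> inner x1 x2 = -1 \<and> norm (r1-r2) = 2/((1-lam)*mu*(-a))
    \<and> inner r1 (bhat b) = inner r2 (bhat b)
    \<and> (norm (r1 - beacon1 b))^2 - (norm (r2 - beacon2 b))^2 - 2*inner r1 (bhat b) = 0
    \<and> inner x1 (bhat b) = 0 \<and> inner x2 (bhat b) = 0"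
proof -
  define r where "r = r1 - r2"
  define p1 where "p1 = r1 - beacon1 b"
  define p2 where "p2 = r2 - beacon2 b"
  define \<rho> where "\<rho> = norm r"
  define \<rho>1 where "\<rho>1 = norm p1"
  define \<rho>2 where "\<rho>2 = norm p2"
  define k where "k = (1 - lam) * mu"
  have kp: "k > 0" unfolding k_def using mu l1 by simp
  obtain w1 w2 where u1: "norm x1 = 1" and u2: "norm x2 = 1" and nz: "r \<noteq> 0" "p1 \<noteq> 0" "p2 \<noteq> 0"
    and fe: "field mu lam a 0 b (r1, r2, x1, x2) = (x1, x2, w1, w2)"
    and c1: "Qd x1 w1 r (x1-x2) = 0" and c2: "Qd x2 w2 r (x1-x2) = 0" and c3: "Qd x1 w1 p1 x1 = 0"
    and c4: "Qd x2 w2 p2 x2 = 0" and c6: "inner r (x1-x2) = 0" and c7: "inner p1 x1 = 0"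
    and c8: "inner p2 x2 = 0" and c9: "inner x1 (bhat b) = 0" and c10: "inner x2 (bhat b) = 0"
    and c11: "inner w1 (bhat b) = 0" and c12: "inner w2 (bhat b) = 0"
    using eq unfolding equil_iff r_def p1_def p2_def by blast
  have \<rho>p: "\<rho> > 0" "\<rho>1 > 0" "\<rho>2 > 0" using nz unfolding \<rho>_def \<rho>1_def \<rho>2_def by auto
  have x11: "inner x1 x1 = 1" "inner x2 x2 = 1" using u1 u2 by (simp_all add: power2_norm_eq_inner[symmetric])
  have rr: "inner r r = \<rho>^2" unfolding \<rho>_def by (simp add: power2_norm_eq_inner)
  define X where "X = inner x1 r / \<rho>"
  have A1: "inner x1 r = X * \<rho>" using \<rho>p unfolding X_def by simp
  have A2: "inner x2 r = X * \<rho>" using A1 c6 by (simp add: inner_diff_right inner_commute)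
  have w1e: "w1 = - ((k * (X - a)) *\<^sub>R ((1 / \<rho>) *\<^sub>R r - X *\<^sub>R x1))"
    using fe c7 unfolding field_eq X_def k_def r_def[symmetric] p1_def[symmetric] \<rho>_def[symmetric]
    by (simp add: inner_commute)
  have w2e: "w2 = - ((k * (- X - a)) *\<^sub>R (- (1 / \<rho>) *\<^sub>R r - (- X) *\<^sub>R x2))"
    using fe c8 A2 \<rho>p unfolding field_eq k_def r_def[symmetric] p2_def[symmetric] \<rho>_def[symmetric]
    by (simp add: inner_commute)
  have e3: "inner w1 p1 = -1"
    using c3 \<rho>p c7 x11 unfolding Qd_def \<rho>1_def[symmetric] by (simp add: inner_commute)
  have e4: "inner w2 p2 = -1"
    using c4 \<rho>p c8 x11 unfolding Qd_def \<rho>2_def[symmetric] by (simp add: inner_commute)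
  have e1: "inner w1 r + 1 - inner x1 x2 = 0"
    using c1 \<rho>p c6 x11 unfolding Qd_def \<rho>_def[symmetric] by (simp add: inner_commute inner_diff_right)
  have e2: "inner w2 r + inner x1 x2 - 1 = 0"
    using c2 \<rho>p c6 x11 unfolding Qd_def \<rho>_def[symmetric] by (simp add: inner_commute inner_diff_right)
  have iw1: "inner w1 r = - (k * (X - a)) * \<rho> * (1 - X^2)"
    unfolding w1e using \<rho>p
    by (simp only: inner_minus_left inner_scaleR_left inner_diff_left rr A1) (simp add: field_simps power2_eq_square)
  have iw2: "inner w2 r = - (k * (- X - a)) * \<rho> * (X^2 - 1)"
    unfolding w2e using \<rho>p
    by (simp only: inner_minus_left inner_scaleR_left inner_diff_left rr A2) (simp add: field_simps power2_eq_square)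
  have s12: "inner w1 r + inner w2 r = 0" using e1 e2 by linarith
  have "- (k * (X - a)) * \<rho> * (1 - X^2) + (- (k * (- X - a)) * \<rho> * (X^2 - 1)) = 0"
    using s12 unfolding iw1 iw2 .
  then have "k * \<rho> * (X * (1 - X^2)) = 0"
    by algebra
  then have X3: "X * (1 - X^2) = 0" using kp \<rho>p by simp
  have X0: "X = 0"
  proof (rule ccontr)
    assume "X \<noteq> 0"
    then have "1 - X^2 = 0" using X3 by simp
    define u where "u = (1 / \<rho>) *\<^sub>R r - X *\<^sub>R x1"
    have "inner u u = 1 - X^2"
      unfolding u_def using \<rho>p rr A1 x11
      by (simp add: inner_diff_left inner_diff_right inner_commute field_simps power2_eq_square)
    then have "u = 0" using \<open>1 - X^2 = 0\<close> by simp
    then have "w1 = 0" unfolding w1e u_def by simp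
    then show False using e3 by simp
  qed
  have A1': "inner x1 r = 0" and A2': "inner x2 r = 0" using A1 A2 X0 by simp_all
  have w1s: "w1 = (k * a / \<rho>) *\<^sub>R r" unfolding w1e X0 by simp
  have w2s: "w2 = - ((k * a / \<rho>) *\<^sub>R r)" unfolding w2e X0 by simp
  have f3: "(k * a / \<rho>) * inner r p1 = -1" using e3 unfolding w1s inner_minus_left inner_scaleR_left by linarith
  have f4: "(k * a / \<rho>) * inner r p2 = 1" using e4 unfolding w2s inner_minus_left inner_scaleR_left by linarith
  have ka: "k * a \<noteq> 0" using f3 by auto
  have rb: "inner r (bhat b) = 0" using c11 ka \<rho>p unfolding w1s by simp
  have f1: "k * a * \<rho> + 1 - inner x1 x2 = 0" using e1 \<rho>p unfolding w1s by (simp add: rr power2_eq_square)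
  have r3: "r$3 = 0" using rb bp by (simp add: inner_3 bhat_c)
  have x13: "x1$3 = 0" using c9 bp by (simp add: inner_3 bhat_c)
  have x23: "x2$3 = 0" using c10 bp by (simp add: inner_3 bhat_c)
  have o1: "x1$1 * r$1 + x1$2 * r$2 = 0" using A1' r3 by (simp add: inner_3)
  have o2: "x2$1 * r$1 + x2$2 * r$2 = 0" using A2' r3 by (simp add: inner_3)
  have n1: "x1$1 * x1$1 + x1$2 * x1$2 = 1" using x11(1) x13 by (simp add: inner_3)
  have n2: "x2$1 * x2$1 + x2$2 * x2$2 = 1" using x11(2) x23 by (simp add: inner_3)
  have rne: "r$1 \<noteq> 0 \<or> r$2 \<noteq> 0"
  proof (rule ccontr)
    assume "\<not> (r$1 \<noteq> 0 \<or> r$2 \<noteq> 0)"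
    then have "r = 0" using r3 by (simp add: vec_eq_iff forall_3)
    then show False using nz by simp
  qed
  define Dt where "Dt = x1$1 * x2$2 - x1$2 * x2$1"
  have "Dt * r$1 = 0" using o1 o2 unfolding Dt_def by algebra
  moreover have "Dt * r$2 = 0" using o1 o2 unfolding Dt_def by algebra
  ultimately have D0: "Dt = 0" using rne by auto
  have xt: "inner x1 x2 = x1$1 * x2$1 + x1$2 * x2$2" using x13 by (simp add: inner_3)
  have "(inner x1 x2)^2 + Dt^2 = 1" unfolding xt Dt_def using n1 n2 by algebra
  then have "(inner x1 x2)^2 = 1" using D0 by simp
  then have "inner x1 x2 = 1 \<or> inner x1 x2 = -1" by (simp add: power2_eq_1_iff)
  moreover have "inner x1 x2 \<noteq> 1" using f1 ka \<rho>p by auto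
  ultimately have xm: "inner x1 x2 = -1" by blast
  then have kar: "k * a * \<rho> = -2" using f1 by simp
  have an: "a < 0"
  proof (rule ccontr)
    assume "\<not> a < 0"
    then have "k * a * \<rho> \<ge> 0" using kp \<rho>p by simp
    then show False using kar by simp
  qed
  have rho: "\<rho> = 2 / ((1 - lam) * mu * (- a))"
    using kar an kp unfolding k_def[symmetric] by (simp add: field_simps)
  have rh: "inner r1 (bhat b) = inner r2 (bhat b)" using rb unfolding r_def by (simp add: inner_diff_left)
  have "(k * a / \<rho>) * (inner r p1 + inner r p2) = 0" unfolding distrib_left using f3 f4 by linarith
  then have s0: "inner r p1 + inner r p2 = 0" using ka \<rho>p by simp
  have last: "(norm p1)^2 - (norm p2)^2 - 2 * inner r1 (bhat b) = 0"
  proof -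
    have "inner p1 p1 - inner p2 p2 - 2 * inner r1 (bhat b) = 0"
      using s0 r3 unfolding r_def p1_def p2_def
      by (simp add: inner_3 beacon_c bhat_c) algebra
    then show ?thesis by (simp add: power2_norm_eq_inner)
  qed
  show ?thesis using an A1' A2' c7 c8 xm rho rh last c9 c10
    unfolding r_def p1_def p2_def \<rho>_def by (simp add: inner_commute)
qed

lemma vec3_eq: "(x::real^3) = vector [p, q, s] \<longleftrightarrow> x$1 = p \<and> x$2 = q \<and> x$3 = s"
  by (simp add: vec_eq_iff forall_3)

lemma existence:
  assumes mu: "mu > 0" and l0: "0 < lam" and l1: "lam < 1" and bp: "b > 0" and an: "a < 0"
  shows "\<exists>s. circling_equilibrium mu lam a 0 b s"
proof -
  define k where "k = (1 - lam) * mu"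
  have kp: "k > 0" unfolding k_def using mu l1 by simp
  define \<rho> where "\<rho> = 2 / (k * (- a))"
  have \<rho>p: "\<rho> > 0" unfolding \<rho>_def using kp an by (simp add: mult_pos_neg)
  have kar: "k * a * \<rho> = -2" unfolding \<rho>_def using kp an by (simp add: field_simps)
  define r1 :: "real^3" where "r1 = vector [\<rho>/2, 0, 0]"
  define r2 :: "real^3" where "r2 = vector [-\<rho>/2, 0, 0]"
  define x1 :: "real^3" where "x1 = vector [0, 1, 0]"
  define x2 :: "real^3" where "x2 = vector [0, -1, 0]"
  have r: "r1 - r2 = vector [\<rho>, 0, 0]" unfolding r1_def r2_def vec3_eq by simp
  have p1: "r1 - beacon1 b = vector [\<rho>/2, 0, b]" unfolding r1_def vec3_eq by (simp add: beacon_c)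
  have p2: "r2 - beacon2 b = vector [-\<rho>/2, 0, -b]" unfolding r2_def vec3_eq by (simp add: beacon_c)
  have d: "x1 - x2 = vector [0, 2, 0]" unfolding x1_def x2_def vec3_eq by simp
  have nr: "norm (vector [\<rho>, 0, 0] :: real^3) = \<rho>" using \<rho>p by (simp add: norm_eq_sqrt_inner inner_3)
  have np1: "norm (vector [\<rho>/2, 0, b] :: real^3) > 0"
    using bp by (simp add: norm_eq_sqrt_inner inner_3 add_nonneg_pos)
  have np2: "norm (vector [-\<rho>/2, 0, -b] :: real^3) > 0"
    using bp by (simp add: norm_eq_sqrt_inner inner_3 add_nonneg_pos)
  have nx1: "norm x1 = 1" "norm x2 = 1" unfolding x1_def x2_def by (simp_all add: norm_eq_sqrt_inner inner_3)
  have fe: "field mu lam a 0 b (r1, r2, x1, x2) = (x1, x2, vector [k * a, 0, 0], vector [- (k * a), 0, 0])"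
    unfolding field_eq r p1 p2 nr k_def[symmetric] using \<rho>p
    by (simp add: x1_def x2_def inner_3 vec3_eq)
  have rnz: "r1 - r2 \<noteq> 0"
  proof
    assume "r1 - r2 = 0"
    then have "(r1 - r2)$1 = 0" by simp
    then show False using \<rho>p unfolding r by simp
  qed
  have ex: "\<exists>w1 w2. field mu lam a 0 b (r1, r2, x1, x2) = (x1, x2, w1, w2) \<and>
      Qd x1 w1 (r1-r2) (x1-x2) = 0 \<and> Qd x2 w2 (r1-r2) (x1-x2) = 0 \<and> Qd x1 w1 (r1 - beacon1 b) x1 = 0 \<and>
      Qd x2 w2 (r2 - beacon2 b) x2 = 0 \<and> inner w1 x2 + inner x1 w2 = 0 \<and>
      inner (r1-r2) (x1-x2) = 0 \<and> inner (r1 - beacon1 b) x1 = 0 \<and>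
      inner (r2 - beacon2 b) x2 = 0 \<and>
      inner x1 (bhat b) = 0 \<and> inner x2 (bhat b) = 0 \<and> inner w1 (bhat b) = 0 \<and> inner w2 (bhat b) = 0"
    apply (rule exI[of _ "vector [k * a, 0, 0]"], rule exI[of _ "vector [- (k * a), 0, 0]"])
    using np1 np2 \<rho>p fe kar unfolding r p1 p2 d Qd_def nr
    by (auto simp: x1_def x2_def inner_3 bhat_c field_simps)
  have "circling_equilibrium mu lam a 0 b (r1, r2, x1, x2)"
    unfolding equil_iff using ex nx1 rnz np1 np2 p1 p2 by auto
  then show ?thesis by blast
qed

theorem proposition5p2:
  fixes mu lam a b :: real
  assumes "b > 0" and "mu > 0" and "0 < lam" and "lam < 1"
    and "-1 \<le> a" and "a \<le> 1"
  shows "((\<exists>s. circling_equilibrium mu lam a 0 b s) \<longleftrightarrow> a < 0) \<and>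
    (\<forall>r1 r2 x1 x2. circling_equilibrium mu lam a 0 b (r1, r2, x1, x2) \<longrightarrow>
       (\<exists>rho1b1 rho2b2 rh1 rh2.
          shape b (r1, r2, x1, x2) =
            (0, 0, 0, 0, -1, 2 / ((1 - lam) * mu * (- a)), rho1b1, rho2b2, rh1, rh2, 0, 0) \<and>
          rh1 = rh2 \<and> rho1b1\<^sup>2 - rho2b2\<^sup>2 - 2 * rh1 = 0))"
proof (intro conjI allI impI)
  show "(\<exists>s. circling_equilibrium mu lam a 0 b s) \<longleftrightarrow> a < 0"
  proof
    assume "\<exists>s. circling_equilibrium mu lam a 0 b s"
    then obtain r1 r2 x1 x2 where "circling_equilibrium mu lam a 0 b (r1, r2, x1, x2)"
      by (metis prod_cases4)
    then show "a < 0" using forward assms by blast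
  next
    assume "a < 0"
    then show "\<exists>s. circling_equilibrium mu lam a 0 b s" using existence assms by blast
  qed
next
  fix r1 r2 x1 x2
  assume "circling_equilibrium mu lam a 0 b (r1, r2, x1, x2)"
  then have F: "a < 0 \<and> inner x1 (r1-r2) = 0 \<and> inner x2 (r1-r2) = 0 \<and> inner x1 (r1 - beacon1 b) = 0
    \<and> inner x2 (r2 - beacon2 b) = 0 \<and> inner x1 x2 = -1 \<and> norm (r1-r2) = 2/((1-lam)*mu*(-a))
    \<and> inner r1 (bhat b) = inner r2 (bhat b)
    \<and> (norm (r1 - beacon1 b))^2 - (norm (r2 - beacon2 b))^2 - 2*inner r1 (bhat b) = 0
    \<and> inner x1 (bhat b) = 0 \<and> inner x2 (bhat b) = 0"
    using forward assms by blast
  show "\<exists>rho1b1 rho2b2 rh1 rh2.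
          shape b (r1, r2, x1, x2) =
            (0, 0, 0, 0, -1, 2 / ((1 - lam) * mu * (- a)), rho1b1, rho2b2, rh1, rh2, 0, 0) \<and>
          rh1 = rh2 \<and> rho1b1\<^sup>2 - rho2b2\<^sup>2 - 2 * rh1 = 0"
    apply (rule exI[of _ "norm (r1 - beacon1 b)"], rule exI[of _ "norm (r2 - beacon2 b)"],
           rule exI[of _ "inner r1 (bhat b)"], rule exI[of _ "inner r2 (bhat b)"])
    using F by (simp add: shape_def Let_def)
qed

end
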